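(* Let $V$ be a $3$-dimensional vector space over an algebraically closed field $k$ with $\mathrm{char}\,k\ne 2$, let $\zeta\in GL(V)$, and let $G(\zeta)=\{\varphi\in GL(V)\mid \varphi\zeta\varphi^{-1}\text{ is a scalar multiple of }\zeta\}$. Then $G(\zeta)$ either coincides with the centralizer $C(\zeta)$ of $\zeta$ in $GL(V)$ or contains $C(\zeta)$ as a subgroup of index $3$. In the latter case $\mathrm{char}\,k\ne3$ and $\zeta$ has three distinct characteristic roots $\alpha_1,\alpha_2,\alpha_3$ such that $\alpha_1\alpha_2^{-1}=\alpha_2\alpha_3^{-1}=\alpha_3\alpha_1^{-1}=\epsilon$, where $\epsilon$ is a primitive cube root of $1$. *)

theory Defs
  imports "HOL-Analysis.Analysis" "HOL-Computational_Algebra.Computational_Algebra"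
begin

definition GL3 :: "('a::field ^3^3) set" where
  "GL3 = {A. invertible A}"

definition centralizer3 :: "'a::field ^3^3 \<Rightarrow> ('a^3^3) set" where
  "centralizer3 z = {p \<in> GL3. p ** z = z ** p}"

definition Gz :: "'a::field ^3^3 \<Rightarrow> ('a^3^3) set" where
  "Gz z = {p \<in> GL3. \<exists>c. p ** z ** matrix_inv p = mat c ** z}"

definition mat_index :: "('a::field ^3^3) set \<Rightarrow> ('a^3^3) set \<Rightarrow> nat" where
  "mat_index G H = card {(\<lambda>h. g ** h) ` H | g. g \<in> G}"

definition char_root :: "'a::field ^3^3 \<Rightarrow> 'a \<Rightarrow> bool" where
  "char_root z a \<longleftrightarrow> det (mat a - z) = 0"

definition subgroup3 :: "('a::field ^3^3) set \<Rightarrow> ('a^3^3) set \<Rightarrow> bool" where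
  "subgroup3 H G \<longleftrightarrow> H \<subseteq> G \<and> mat 1 \<in> H \<and> (\<forall>x\<in>H. \<forall>y\<in>H. x ** y \<in> H) \<and> (\<forall>x\<in>H. matrix_inv x \<in> H)"

end

theory Submission
  imports Defs
begin
no_notation fps_nth (infixl "$" 75)

lemma mat_left: "(mat c ** A) $ i $ j = c * (A $ i $ j :: 'a::comm_ring_1)"
proof -
  have "\<And>k. (if i = k then c else 0) * A$k$j = (if i = k then c * A$k$j else 0)" by simp
  thus ?thesis by (simp add: matrix_matrix_mult_def mat_def)
qed

lemma mat_right: "(A ** mat c) $ i $ j = (A $ i $ j :: 'a::comm_ring_1) * c"
proof -
  have "\<And>k. A $ i $ k * (if k = j then c else 0) = (if j = k then A$i$k * c else 0)" by simp
  thus ?thesis by (simp add: matrix_matrix_mult_def mat_def)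
qed

lemma mat_comm: "mat c ** (A::'a::comm_ring_1^'n^'n) = A ** mat c"
  by (simp add: vec_eq_iff mat_left mat_right mult.commute)

lemma mat_mat: "mat c ** mat d = (mat (c*d) :: 'a::comm_ring_1^'n^'n)"
  by (simp add: vec_eq_iff mat_left) (simp add: mat_def)

lemma mat_eqD: assumes "mat c = (mat d :: 'a::comm_ring_1^'n^'n)" shows "c = d"
proof -
  have "(mat c :: 'a^'n^'n) $ i $ i = (mat d :: 'a^'n^'n) $ i $ i" for i using assms by simp
  thus ?thesis by (simp add: mat_def)
qed

lemma det_mat3: "det (mat c :: 'a::comm_ring_1^3^3) = c^3"
  by (simp add: det_3 mat_def power3_eq_cube)

lemma ldiff: "(A::'a::comm_ring_1^'n^'m) ** (B - C) = A ** B - A ** C"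
  by (simp add: vec_eq_iff matrix_matrix_mult_def algebra_simps sum_subtractf)

lemma rdiff: "((B - C)::'a::comm_ring_1^'n^'m) ** A = B ** A - C ** A"
  by (simp add: vec_eq_iff matrix_matrix_mult_def algebra_simps sum_subtractf)

lemma inv_props: assumes "invertible (A::'a::field^'n^'n)"
  shows "A ** matrix_inv A = mat 1" "matrix_inv A ** A = mat 1"
proof -
  have "\<exists>A'. A ** A' = mat 1 \<and> A' ** A = mat 1" using assms invertible_def by blast
  hence "A ** matrix_inv A = mat 1 \<and> matrix_inv A ** A = mat 1"
    unfolding matrix_inv_def by (rule someI_ex)
  thus "A ** matrix_inv A = mat 1" "matrix_inv A ** A = mat 1" by auto
qed

lemma inv_invertible: assumes "invertible (A::'a::field^'n^'n)"
  shows "invertible (matrix_inv A)"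
  using inv_props[OF assms] invertible_def by blast

lemma conj_iff: assumes "invertible (p::'a::field^'n^'n)"
  shows "(p ** z ** matrix_inv p = M) \<longleftrightarrow> (p ** z = M ** p)"
proof
  assume "p ** z ** matrix_inv p = M"
  hence "p ** z ** matrix_inv p ** p = M ** p" by simp
  thus "p ** z = M ** p" by (simp add: matrix_mul_assoc[symmetric] inv_props[OF assms])
next
  assume "p ** z = M ** p"
  hence "p ** z ** matrix_inv p = M ** p ** matrix_inv p" by simp
  thus "p ** z ** matrix_inv p = M" by (simp add: matrix_mul_assoc[symmetric] inv_props[OF assms])
qed

lemma E: "(mat x - z :: 'a::comm_ring_1^'n^'n)$i$j = (if i = j then x else 0) - z$i$j"
  by (simp add: mat_def)

lemma ne3: "(1::3) \<noteq> 2" "(1::3) \<noteq> 3" "(2::3) \<noteq> 3" "(2::3) \<noteq> 1" "(3::3) \<noteq> 1" "(3::3) \<noteq> 2"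
  by simp_all

lemma charpoly_root:
  fixes z :: "'a::alg_closed_field^3^3"
  shows "\<exists>a. det (mat a - z) = 0"
proof -
  define f where "f k = (if k = 3 then 1 else if k = 2 then -(z$1$1 + z$2$2 + z$3$3)
     else if k = 1 then z$1$1*z$2$2 + z$1$1*z$3$3 + z$2$2*z$3$3 - z$1$2*z$2$1 - z$1$3*z$3$1 - z$2$3*z$3$2
     else - det z)" for k :: nat
  obtain x where x: "(\<Sum>k\<le>3. f k * x ^ k) = 0"
    using alg_closed[of 3 f] by (auto simp: f_def)
  have e: "(\<Sum>k\<le>3. f k * x ^ k) = f 0 + f 1 * x + f 2 * x^2 + f 3 * x^3"
    by (simp add: eval_nat_numeral)
  have "det (mat x - z) = f 0 + f 1 * x + f 2 * x^2 + f 3 * x^3"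
    unfolding f_def det_3 E by (simp add: power2_eq_square power3_eq_cube algebra_simps)
  thus ?thesis using x e by auto
qed

definition Sc :: "'a::field^3^3 \<Rightarrow> 'a \<Rightarrow> ('a^3^3) set" where
  "Sc z c = {p \<in> GL3. p ** z ** matrix_inv p = mat c ** z}"

lemma Sc_iff: "p \<in> Sc z c \<longleftrightarrow> invertible p \<and> p ** z = mat c ** z ** p"
  unfolding Sc_def GL3_def using conj_iff by blast

lemma Sc_cube:
  fixes z :: "'a::field^3^3"
  assumes "invertible z" "p \<in> Sc z c" shows "c^3 = 1"
proof -
  have p: "invertible p" "p ** z = mat c ** z ** p" using assms(2) Sc_iff by auto
  have "det p * det z = c^3 * det z * det p"
    using arg_cong[OF p(2), of det] by (simp add: det_mul det_mat3)
  moreover have "det p \<noteq> 0" "det z \<noteq> 0" using p(1) assms(1) invertible_det_nz by auto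
  ultimately show ?thesis by (simp add: algebra_simps)
qed

lemma Sc_uniq:
  fixes z :: "'a::field^3^3"
  assumes "invertible z" "p \<in> Sc z c" "p \<in> Sc z d" shows "c = d"
proof -
  have "mat c ** z = mat d ** z" using assms(2,3) unfolding Sc_def by auto
  hence "mat c ** z ** matrix_inv z = mat d ** z ** matrix_inv z" by simp
  hence "mat c = (mat d :: 'a^3^3)"
    by (simp add: matrix_mul_assoc[symmetric] inv_props[OF assms(1)])
  thus ?thesis by (rule mat_eqD)
qed

lemma Sc_mult:
  fixes z :: "'a::field^3^3"
  assumes "p \<in> Sc z c" "q \<in> Sc z d" shows "p ** q \<in> Sc z (c * d)"
proof -
  have p: "invertible p" "p ** z = mat c ** z ** p" using assms(1) Sc_iff by auto
  have q: "invertible q" "q ** z = mat d ** z ** q" using assms(2) Sc_iff by auto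
  have "p ** q ** z = p ** (q ** z)" by (simp add: matrix_mul_assoc)
  also have "\<dots> = (p ** mat d) ** z ** q" by (simp add: q(2) matrix_mul_assoc)
  also have "\<dots> = mat d ** (p ** z) ** q" by (simp add: mat_comm matrix_mul_assoc)
  also have "\<dots> = (mat d ** mat c) ** z ** (p ** q)" by (simp add: p(2) matrix_mul_assoc)
  also have "\<dots> = mat (c * d) ** z ** (p ** q)" by (simp add: mat_mat mult.commute)
  finally show ?thesis using Sc_iff invertible_mult p(1) q(1) by blast
qed

lemma Sc_inv:
  fixes z :: "'a::field^3^3"
  assumes "p \<in> Sc z c" "c \<noteq> 0" shows "matrix_inv p \<in> Sc z (inverse c)"
proof -
  have p: "invertible p" "p ** z = mat c ** z ** p" using assms(1) Sc_iff by auto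
  let ?i = "matrix_inv p"
  have "z ** ?i = ?i ** (p ** z) ** ?i"
    by (simp add: matrix_mul_assoc inv_props[OF p(1)])
  also have "\<dots> = ?i ** mat c ** z ** (p ** ?i)" by (simp add: p(2) matrix_mul_assoc)
  also have "\<dots> = mat c ** ?i ** z" by (simp add: inv_props[OF p(1)] mat_comm)
  finally have h: "z ** ?i = mat c ** ?i ** z" .
  have "mat (inverse c) ** z ** ?i = mat (inverse c) ** (mat c ** ?i ** z)"
    by (simp add: h[symmetric] matrix_mul_assoc)
  also have "\<dots> = ?i ** z" using assms(2)
    by (simp add: matrix_mul_assoc mat_mat)
  finally show ?thesis using Sc_iff inv_invertible[OF p(1)] by metis
qed

lemma Sc_root:
  fixes z :: "'a::field^3^3"
  assumes "p \<in> Sc z c" "det (mat a - z) = 0" shows "det (mat (c * a) - z) = 0"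
proof -
  have p: "invertible p" "p ** z = mat c ** z ** p" using assms(1) Sc_iff by auto
  have "p ** (mat (c*a) - z) = (mat (c*a) - mat c ** z) ** p"
    by (simp add: ldiff rdiff p(2) mat_comm)
  hence "det p * det (mat (c*a) - z) = det (mat (c*a) - mat c ** z) * det p"
    by (metis det_mul)
  moreover have "det p \<noteq> 0" using p(1) invertible_det_nz by auto
  moreover have "mat (c*a) - mat c ** z = mat c ** (mat a - z)"
    by (simp add: ldiff mat_mat)
  ultimately show ?thesis using assms(2) by (simp add: det_mul)
qed

lemma cube_roots:
  fixes e c :: "'a::field"
  assumes "e^3 = 1" "e \<noteq> 1" "c^3 = 1" shows "c = 1 \<or> c = e \<or> c = e^2"
proof -
  have "(e - 1) * (1 + e + e^2) = e^3 - 1" by (simp add: algebra_simps power2_eq_square power3_eq_cube)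
  hence s: "1 + e + e^2 = 0" using assms by simp
  have "(c - 1) * (c - e) * (c - e^2) = c^3 - (1 + e + e^2) * c^2 + (1 + e + e^2) * e * c - e^3"
    by (simp add: algebra_simps power2_eq_square power3_eq_cube)
  also have "\<dots> = 0" using s assms by simp
  finally show ?thesis by auto
qed

theorem lemma4p3:
  fixes z :: "'a::alg_closed_field ^3^3"
  assumes "CHAR('a) \<noteq> 2"
    and "z \<in> GL3"
  shows "Gz z = centralizer3 z
    \<or> (subgroup3 (centralizer3 z) (Gz z) \<and> mat_index (Gz z) (centralizer3 z) = 3
       \<and> CHAR('a) \<noteq> 3
       \<and> (\<exists>a1 a2 a3 e. char_root z a1 \<and> char_root z a2 \<and> char_root z a3
            \<and> a1 \<noteq> a2 \<and> a2 \<noteq> a3 \<and> a1 \<noteq> a3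
            \<and> e ^ 3 = 1 \<and> e \<noteq> 1
            \<and> a1 * inverse a2 = e \<and> a2 * inverse a3 = e \<and> a3 * inverse a1 = e))"
proof -
  have zi: "invertible z" using assms(2) GL3_def by auto
  have G: "Gz z = (\<Union>c. Sc z c)" unfolding Gz_def Sc_def by auto
  have C: "centralizer3 z = Sc z 1"
    unfolding centralizer3_def Sc_iff by (auto simp: Sc_iff GL3_def)
  show ?thesis
  proof (cases "\<forall>c p. p \<in> Sc z c \<longrightarrow> c = 1")
    case True
    hence "Gz z = centralizer3 z" unfolding G C by auto
    thus ?thesis by blast
  next
    case False
    then obtain e p0 where p0: "p0 \<in> Sc z e" and e1: "e \<noteq> 1" by blast
    have e3: "e^3 = 1" using Sc_cube[OF zi p0] .
    have e0: "e \<noteq> 0" using e3 by (auto simp: power3_eq_cube)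
    have e2ne1: "e^2 \<noteq> 1"
    proof
      assume "e^2 = 1" hence "e^3 = e" by (simp add: power3_eq_cube power2_eq_square)
      thus False using e3 e1 by simp
    qed
    have e2nee: "e^2 \<noteq> e"
    proof
      assume "e^2 = e" hence "e = 1" using e0 by (simp add: power2_eq_square)
      thus False using e1 by simp
    qed
    have id1: "mat 1 \<in> Sc z 1" unfolding Sc_iff by (simp add: invertible_def)
    have pp: "p0 ** p0 \<in> Sc z (e^2)" using Sc_mult[OF p0 p0] by (simp add: power2_eq_square)
    have sub: "subgroup3 (centralizer3 z) (Gz z)"
      unfolding subgroup3_def C G using id1 Sc_mult[of _ z 1 _ 1] Sc_inv[of _ z 1] by auto
    have coset: "(\<lambda>h. g ** h) ` Sc z 1 = Sc z c" if g: "g \<in> Sc z c" for g c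
    proof
      show "(\<lambda>h. g ** h) ` Sc z 1 \<subseteq> Sc z c" using Sc_mult[OF g] by fastforce
    next
      have c0: "c \<noteq> 0" using Sc_cube[OF zi g] by (auto simp: power3_eq_cube)
      have gi: "invertible g" using g Sc_iff by auto
      show "Sc z c \<subseteq> (\<lambda>h. g ** h) ` Sc z 1"
      proof
        fix h assume h: "h \<in> Sc z c"
        have "matrix_inv g ** h \<in> Sc z (inverse c * c)" by (rule Sc_mult[OF Sc_inv[OF g c0] h])
        hence "matrix_inv g ** h \<in> Sc z 1" using c0 by simp
        moreover have "h = g ** (matrix_inv g ** h)"
          by (simp add: matrix_mul_assoc inv_props[OF gi])
        ultimately show "h \<in> (\<lambda>h. g ** h) ` Sc z 1" by blast
      qed
    qed
    have cosets: "{(\<lambda>h. g ** h) ` centralizer3 z | g. g \<in> Gz z} = Sc z ` {1, e, e^2}"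
    proof
      show "{(\<lambda>h. g ** h) ` centralizer3 z | g. g \<in> Gz z} \<subseteq> Sc z ` {1, e, e^2}"
      proof
        fix X assume "X \<in> {(\<lambda>h. g ** h) ` centralizer3 z | g. g \<in> Gz z}"
        then obtain g c where g: "g \<in> Sc z c" and X: "X = (\<lambda>h. g ** h) ` Sc z 1"
          unfolding C G by auto
        have "c \<in> {1, e, e^2}" using cube_roots[OF e3 e1 Sc_cube[OF zi g]] by auto
        thus "X \<in> Sc z ` {1, e, e^2}" using X coset[OF g] by auto
      qed
    next
      have "Sc z c \<in> {(\<lambda>h. g ** h) ` centralizer3 z | g. g \<in> Gz z}" if "g \<in> Sc z c" for g c
        using coset[OF that] that unfolding C G by blast
      thus "Sc z ` {1, e, e^2} \<subseteq> {(\<lambda>h. g ** h) ` centralizer3 z | g. g \<in> Gz z}"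
        using id1 p0 pp by auto
    qed
    have inj: "inj_on (Sc z) {1, e, e^2}"
    proof (rule inj_onI)
      fix c d assume c: "c \<in> {1, e, e^2}" and d: "d \<in> {1, e, e^2}" and eq: "Sc z c = Sc z d"
      obtain w where "w \<in> Sc z c" using c id1 p0 pp by auto
      thus "c = d" using eq Sc_uniq[OF zi] by blast
    qed
    have card3: "card {1, e, e^2} = 3" using e1 e2ne1 e2nee by auto
    have idx: "mat_index (Gz z) (centralizer3 z) = 3"
      unfolding mat_index_def cosets card_image[OF inj] card3 ..
    have ch: "CHAR('a) \<noteq> 3"
    proof
      assume "CHAR('a) = 3"
      hence c3: "(of_nat 3 :: 'a) = 0" by (metis of_nat_CHAR)
      have "(e - 1)^3 = e^3 - of_nat 3 * e^2 + of_nat 3 * e - 1"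
        by (simp add: algebra_simps power2_eq_square power3_eq_cube)
      hence "(e - 1)^3 = 0" using c3 e3 by simp
      thus False using e1 by simp
    qed
    obtain a where a: "det (mat a - z) = 0" using charpoly_root by blast
    have a0: "a \<noteq> 0"
    proof
      assume "a = 0"
      hence "det (- z) = 0" using a by simp
      hence "det z = 0" by (simp add: det_3 algebra_simps)
      thus False using zi invertible_det_nz by auto
    qed
    have r1: "char_root z a" using a char_root_def by auto
    have r2: "char_root z (e * a)" using Sc_root[OF p0 a] char_root_def by auto
    have r3: "char_root z (e^2 * a)" using Sc_root[OF pp a] char_root_def by auto
    have ex: "\<exists>a1 a2 a3 e. char_root z a1 \<and> char_root z a2 \<and> char_root z a3
            \<and> a1 \<noteq> a2 \<and> a2 \<noteq> a3 \<and> a1 \<noteq> a3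
            \<and> e ^ 3 = 1 \<and> e \<noteq> 1
            \<and> a1 * inverse a2 = e \<and> a2 * inverse a3 = e \<and> a3 * inverse a1 = e"
    proof (intro exI conjI)
      show "char_root z (e^2 * a)" "char_root z (e * a)" "char_root z a" by fact+
      show "e^3 = 1" "e \<noteq> 1" by fact+
      show "e^2 * a \<noteq> e * a" using e2nee a0 by simp
      show "e * a \<noteq> a" using e1 a0 by simp
      show "e^2 * a \<noteq> a" using e2ne1 a0 by simp
      show "e^2 * a * inverse (e * a) = e" using a0 e0 by (simp add: field_simps power2_eq_square)
      show "e * a * inverse a = e" using a0 by simp
      show "a * inverse (e^2 * a) = e" using a0 e0 e3
        by (simp add: field_simps power2_eq_square power3_eq_cube)
    qed
    show ?thesis using sub idx ch ex by blast
  qed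
qed

end
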